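(* Let $h$ be sufficiently small and $T$ an interface element (curve or line variant). For arbitrary points $\overline X_i\in l$, $i\in\mathcal I$, define for $s=\pm$ and $X\in T_p^s$ $$\boldsymbol\Lambda_s(X)=\sum_{i\in\mathcal I}(M_i-X)\phi^s_{i,T}(X)+\sum_{i\in\mathcal I^{s'}}(\overline M^s(F)-I)^T(M_i-\overline X_i)\phi^s_{i,T}(X)+\sum_{i\in\mathcal I^{int}}\frac1{|b_i|}\int_{b_i\cap T^{s'}}(\overline M^s(F)-I)^T(P-\overline X_i)\,ds(P)\,\phi^s_{i,T}(X),$$ and $\boldsymbol\Lambda=\boldsymbol\Lambda_+$ on $T_p^+$, $\boldsymbol\Lambda=(\overline M^+(F))^T\boldsymbol\Lambda_-$ on $T_p^-$. Then $\boldsymbol\Lambda\in[S_h^{int}(T)]^2$ and $\int_{b_i}\boldsymbol\Lambda\,ds=\mathbf 0$ for every $i\in\mathcal I$.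
   Context: Standard setting. $\Omega\subset\mathbb R^2$ is a bounded domain that is a finite union of rectangles, separated by a curve $\Gamma$ into open subdomains $\Omega^+,\Omega^-$ with $\overline\Omega=\overline{\Omega^+}\cup\overline{\Omega^-}\cup\Gamma$; $\beta^\pm>0$ are constants and $\rho=\beta^-/\beta^+$. $\mathcal T_h$ is a Cartesian mesh of $\Omega$ made either of rectangles or of triangles (Cartesian rectangles cut along a diagonal), with maximal edge length $h$. An element $T$ is an interface element if its interior meets $\Gamma$. The mesh satisfies: (H1) $\Gamma$ does not intersect an edge of any element at more than two points unless the edge is part of $\Gamma$; (H2) if $\Gamma$ meets the boundary of an element at two points, they lie on different edges; (H3) $\Gamma$ is piecewise $C^2$ and $\Gamma\cap T$ is $C^2$ for every interface element $T$; (H4) $PC^2_{int}(T)$ is dense in $PH^2_{int}(T)$ for every interface element $T$. On an interface element $T$, $D,E$ are the two points of $\Gamma\cap\partial T$, $l$ is the segment $DE$, $\bar{\mathbf n}=(\bar n_x,\bar n_y)^T$ is a unit normal to $l$, and $T^\pm=T\cap\Omega^\pm$. IFE setting. Let $T$ be an interface element with edges $b_i$, $i\in\mathcal I=\{1,\dots,N\}$ ($N=3$ for triangles, $N=4$ for rectangles) and midpoints $M_i$ of $b_i$. $\Pi_T=\mathrm{span}\{1,x,y\}$ (Crouzeix–Raviart, triangles) or $\Pi_T=\mathrm{span}\{1,x,y,x^2-y^2\}$ (rotated-$Q_1$, rectangles). Set $\mathcal I^s=\{i:b_i\subseteq\overline{T^s}\}$, $\mathcal I^{int}=\{i: b_i\cap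 T^+\ne\emptyset\text{ and }b_i\cap T^-\ne\emptyset\}$ ($s=\pm$); $s'$ denotes the sign opposite to $s$. One of two variants is fixed: (curve) a point $F\in\Gamma\cap T$, $F\neq D,E$, $\mathbf v(F)=\mathbf n(F)$ the unit normal to $\Gamma$ at $F$ oriented so that $\bar{\mathbf n}\cdot\mathbf n(F)>0$, and $T_p^\pm=T^\pm$; (line) a point $F\in l$, $\mathbf v(F)=\bar{\mathbf n}$, and $T_p^\pm$ are the two parts into which $l$ cuts $T$, $T_p^s$ being the one on the same side of $l$ as $\partial T\cap \overline{T^s}$. An IFE function on $T$ is a function $\phi_T$ with $\phi_T|_{T_p^s}=\phi_T^s$, $\phi_T^s\in\Pi_T$ ($s=\pm$), satisfying (J1) $\phi_T^-=\phi_T^+$ on $l$, and additionally $\partial_{xx}\phi_T^-=\partial_{xx}\phi_T^+$ in the rotated-$Q_1$ case; (J2) $\beta^-\nabla\phi_T^-(F)\cdot\mathbf v(F)=\beta^+\nabla\phi_T^+(F)\cdot\mathbf v(F)$. $S_h^{int}(T)$ denotes the linear space of IFE functions on $T$, and $\phi_{i,T}$, $i\in\mathcal I$, are the IFE functions with $\frac1{|b_j|}\int_{b_j}\phi_{i,T}\,ds=\delta_{ij}$ (they exist and are unique for $h$ small enough); $\phi^s_{i,T}\in\Pi_T$ is the polynomial piece of $\phi_{i,T}$ on $T^s_p$, regarded as a polynomial on all of $\mathbb R^2$. With $\mathbf v(F)=(v_x,v_y)^T$ and $r_s=\beta^s/\beta^{s'}$, $$\overline M^s(F)=\frac{1}{\bar{\mathbf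 n}\cdot\mathbf v(F)}\begin{pmatrix}\bar n_yv_y+r_s\bar n_xv_x & (r_s-1)\bar n_xv_y\\ (r_s-1)\bar n_yv_x & \bar n_xv_x+r_s\bar n_yv_y\end{pmatrix}.$$ *)

theory Defs
  imports "HOL-Analysis.Analysis"
begin

datatype sgn = Pos | Neg

fun opp :: "sgn \<Rightarrow> sgn" where
  "opp Pos = Neg" | "opp Neg = Pos"

definition pt :: "real \<Rightarrow> real \<Rightarrow> real^2" where
  "pt a b = vector [a, b]"

(* An element of Pi_T, given by its coordinates (a,b,c,d) w.r.t. the basis
   1, x, y, x^2-y^2 (d = 0 in the Crouzeix-Raviart / triangle case). *)
type_synonym poly2 = "real \<times> real \<times> real \<times> real"

definition peval :: "poly2 \<Rightarrow> real^2 \<Rightarrow> real" where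
  "peval p X = (case p of (a, b, c, d) \<Rightarrow>
      a + b * X$1 + c * X$2 + d * ((X$1)^2 - (X$2)^2))"

definition pgrad :: "poly2 \<Rightarrow> real^2 \<Rightarrow> real^2" where
  "pgrad p X = (case p of (a, b, c, d) \<Rightarrow> pt (b + 2 * d * X$1) (c - 2 * d * X$2))"

definition pdxx :: "poly2 \<Rightarrow> real" where
  "pdxx p = (case p of (a, b, c, d) \<Rightarrow> 2 * d)"

definition PiT :: "bool \<Rightarrow> poly2 set" where
  "PiT is_rect = {(a, b, c, d). is_rect \<or> d = 0}"

(* Element: Cartesian rectangle [x0,x0+hx] x [y0,y0+hy] (rect = True), or the
   triangle obtained by removing corner number cutc (0..3) of it (rect = False). *)
record cfg =
  rect :: bool
  cutc :: nat
  x0 :: real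
  y0 :: real
  hx :: real
  hy :: real
  Om :: "sgn \<Rightarrow> (real^2) set"
  Gam :: "(real^2) set"
  bp :: real
  bm :: real
  Dp :: "real^2"
  Ep :: "real^2"
  nb :: "real^2"
  curve :: bool                    (* True: curve variant, False: line variant *)
  Fp :: "real^2"
  vF :: "real^2"

definition corner :: "cfg \<Rightarrow> nat \<Rightarrow> real^2" where
  "corner C j = (if j = 0 then pt (x0 C) (y0 C)
     else if j = 1 then pt (x0 C + hx C) (y0 C)
     else if j = 2 then pt (x0 C + hx C) (y0 C + hy C)
     else pt (x0 C) (y0 C + hy C))"

definition NN :: "cfg \<Rightarrow> nat" where
  "NN C = (if rect C then 4 else 3)"

(* vertices, numbered cyclically; edge b_i joins V i and V (i+1) *)
definition V :: "cfg \<Rightarrow> nat \<Rightarrow> real^2" where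
  "V C i = (if rect C then corner C (i mod 4) else corner C ((cutc C + 1 + i mod 3) mod 4))"

definition edge :: "cfg \<Rightarrow> nat \<Rightarrow> (real^2) set" where
  "edge C i = closed_segment (V C i) (V C (Suc i))"

definition mid :: "cfg \<Rightarrow> nat \<Rightarrow> real^2" where
  "mid C i = midpoint (V C i) (V C (Suc i))"

definition elen :: "cfg \<Rightarrow> nat \<Rightarrow> real" where
  "elen C i = dist (V C i) (V C (Suc i))"

definition Tset :: "cfg \<Rightarrow> (real^2) set" where
  "Tset C = convex hull (V C ` {..<NN C})"

definition Tsg :: "cfg \<Rightarrow> sgn \<Rightarrow> (real^2) set" where
  "Tsg C s = Tset C \<inter> Om C s"

definition Tp :: "cfg \<Rightarrow> sgn \<Rightarrow> (real^2) set" where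
  "Tp C s = (if curve C then Tsg C s
     else {X \<in> Tset C. \<exists>Q \<in> frontier (Tset C) \<inter> closure (Tsg C s).
             (nb C \<bullet> (X - Dp C)) * (nb C \<bullet> (Q - Dp C)) > 0})"

definition seg_int :: "real^2 \<Rightarrow> real^2 \<Rightarrow> (real^2 \<Rightarrow> 'a::euclidean_space) \<Rightarrow> 'a" where
  "seg_int A B f = dist A B *\<^sub>R integral {0..1} (\<lambda>t. f (A + t *\<^sub>R (B - A)))"

definition edge_avg :: "cfg \<Rightarrow> nat \<Rightarrow> (real^2 \<Rightarrow> real) \<Rightarrow> real" where
  "edge_avg C j f = seg_int (V C j) (V C (Suc j)) f / elen C j"

(* IFE conditions (J1), (J2) on a pair of polynomial pieces q Pos, q Neg *)
definition is_ife :: "cfg \<Rightarrow> (sgn \<Rightarrow> poly2) \<Rightarrow> bool" where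
  "is_ife C q \<longleftrightarrow> q Pos \<in> PiT (rect C) \<and> q Neg \<in> PiT (rect C)
     \<and> (\<forall>X \<in> closed_segment (Dp C) (Ep C). peval (q Neg) X = peval (q Pos) X)
     \<and> (rect C \<longrightarrow> pdxx (q Neg) = pdxx (q Pos))
     \<and> bm C * (pgrad (q Neg) (Fp C) \<bullet> vF C) = bp C * (pgrad (q Pos) (Fp C) \<bullet> vF C)"

definition ife_fun :: "cfg \<Rightarrow> (sgn \<Rightarrow> poly2) \<Rightarrow> real^2 \<Rightarrow> real" where
  "ife_fun C q X = (if X \<in> Tp C Pos then peval (q Pos) X else peval (q Neg) X)"

definition Sint :: "cfg \<Rightarrow> (real^2 \<Rightarrow> real) \<Rightarrow> bool" where
  "Sint C f \<longleftrightarrow> (\<exists>q. is_ife C q \<and> (\<forall>s. \<forall>X \<in> Tp C s. f X = peval (q s) X))"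

definition Iset :: "cfg \<Rightarrow> sgn \<Rightarrow> nat set" where
  "Iset C s = {i. i < NN C \<and> edge C i \<subseteq> closure (Tsg C s)}"

definition Iint :: "cfg \<Rightarrow> nat set" where
  "Iint C = {i. i < NN C \<and> edge C i \<inter> Tsg C Pos \<noteq> {} \<and> edge C i \<inter> Tsg C Neg \<noteq> {}}"

definition Mbar :: "cfg \<Rightarrow> sgn \<Rightarrow> real^2^2" where
  "Mbar C s = (let r = (if s = Pos then bp C / bm C else bm C / bp C);
       nx = nb C $ 1; ny = nb C $ 2; vx = vF C $ 1; vy = vF C $ 2 in
     (1 / (nb C \<bullet> vF C)) *\<^sub>R
       (vector [vector [ny * vy + r * nx * vx, (r - 1) * nx * vy],
                vector [(r - 1) * ny * vx, nx * vx + r * ny * vy]] :: real^2^2))"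

definition Lam_s :: "cfg \<Rightarrow> (nat \<Rightarrow> sgn \<Rightarrow> poly2) \<Rightarrow> (nat \<Rightarrow> real^2) \<Rightarrow> sgn \<Rightarrow> real^2 \<Rightarrow> real^2" where
  "Lam_s C phi Xb s X =
     (\<Sum>i<NN C. peval (phi i s) X *\<^sub>R (mid C i - X))
   + (\<Sum>i\<in>Iset C (opp s). peval (phi i s) X *\<^sub>R
        (transpose (Mbar C s - mat 1) *v (mid C i - Xb i)))
   + (\<Sum>i\<in>Iint C. peval (phi i s) X *\<^sub>R ((1 / elen C i) *\<^sub>R
        seg_int (V C i) (V C (Suc i))
          (\<lambda>P. (indicator (Tsg C (opp s)) P :: real) *\<^sub>R
                 (transpose (Mbar C s - mat 1) *v (P - Xb i)))))"

definition Lam :: "cfg \<Rightarrow> (nat \<Rightarrow> sgn \<Rightarrow> poly2) \<Rightarrow> (nat \<Rightarrow> real^2) \<Rightarrow> real^2 \<Rightarrow> real^2" where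
  "Lam C phi Xb X = (if X \<in> Tp C Pos then Lam_s C phi Xb Pos X
                     else transpose (Mbar C Pos) *v Lam_s C phi Xb Neg X)"

end

theory Submission
  imports Defs
begin

lemma inner2: "(x::real^2) \<bullet> y = x$1*y$1 + x$2*y$2"
  by (simp add: inner_vec_def sum_2)
lemma pt_nth[simp]: "pt a b $ 1 = a" "pt a b $ 2 = b"
  by (simp_all add: pt_def)
lemma vec2_eq: "(x::real^2) = y \<longleftrightarrow> x$1 = y$1 \<and> x$2 = y$2"
  by (simp add: vec_eq_iff forall_2)

definition rr :: "cfg \<Rightarrow> sgn \<Rightarrow> real" where
  "rr C s = (if s = Pos then bp C / bm C else bm C / bp C)"

lemma Mbar_entries:
  fixes n1 n2 w1 w2 r :: real
  assumes "n1*w1+n2*w2 \<noteq> 0"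
  shows "(1/(n1*w1+n2*w2)) * (n2*w2 + r*n1*w1) - 1 = (r-1)*w1*n1/(n1*w1+n2*w2)"
    "(1/(n1*w1+n2*w2)) * (n1*w1 + r*n2*w2) - 1 = (r-1)*w2*n2/(n1*w1+n2*w2)"
    "(1/(n1*w1+n2*w2)) * ((r-1)*n1*w2) = (r-1)*w2*n1/(n1*w1+n2*w2)"
    "(1/(n1*w1+n2*w2)) * ((r-1)*n2*w1) = (r-1)*w1*n2/(n1*w1+n2*w2)"
  using assms by (simp_all add: field_simps)

lemma Mbar_T:
  assumes "nb C \<bullet> vF C \<noteq> 0"
  shows "transpose (Mbar C s - mat 1) *v y = ((rr C s - 1) * (nb C \<bullet> y) / (nb C \<bullet> vF C)) *\<^sub>R vF C"
proof -
  let ?r = "rr C s"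
  have nv: "nb C $ 1 * vF C $ 1 + nb C $ 2 * vF C $ 2 \<noteq> 0" using assms by (simp add: inner2)
  have T: "transpose (Mbar C s - mat 1) = (\<chi> i j. (?r - 1) * vF C $ i * nb C $ j / (nb C \<bullet> vF C))"
    unfolding vec_eq_iff forall_2
    using Mbar_entries[OF nv, of ?r]
    by (simp add: Mbar_def rr_def Let_def transpose_def mat_def inner2)
  have g: "\<And>N c (n::real^2) v y. N \<noteq> 0 \<Longrightarrow> (\<chi> i j. c * v $ i * n $ j / N) *v y = (c * (n \<bullet> y) / N) *\<^sub>R v"
    by (simp add: vec_eq_iff matrix_vector_mult_def sum_2 inner2 field_simps)
  show ?thesis unfolding T using g assms by blast
qed

lemma perp2:
  fixes u1 u2 n1 n2 w1 w2 :: real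
  assumes "u1*w1 + u2*w2 = 0" "n1*w1+n2*w2 = 0" "w1 \<noteq> 0 \<or> w2 \<noteq> 0" "n1^2+n2^2 = 1"
  shows "u1 = (u1*n1+u2*n2)*n1 \<and> u2 = (u1*n1+u2*n2)*n2"
proof -
  have c: "u1*n2 - u2*n1 = 0"
  proof -
    have "(u1*n2 - u2*n1)*w1 = 0" "(u1*n2 - u2*n1)*w2 = 0"
      using assms(1,2) by algebra+
    then show ?thesis using assms(3) by auto
  qed
  have "u1 - (u1*n1+u2*n2)*n1 = n2*(u1*n2-u2*n1)" "u2 - (u1*n1+u2*n2)*n2 = n1*(u2*n1 - u1*n2)"
    using assms(4) by (simp_all add: algebra_simps power2_eq_square) (algebra)+
  then show ?thesis using c by auto
qed

definition lin :: "real^2 \<Rightarrow> real^2 \<Rightarrow> poly2" where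
  "lin w P = (-(w \<bullet> P), w$1, w$2, 0)"
lemma peval_lin[simp]: "peval (lin w P) X = w \<bullet> (X - P)"
  by (simp add: lin_def peval_def inner2 algebra_simps)
lemma pgrad_lin[simp]: "pgrad (lin w P) X = w"
  by (simp add: lin_def pgrad_def vec2_eq)

definition kap :: "cfg \<Rightarrow> poly2 \<Rightarrow> real" where
  "kap C p = (bp C - bm C) * (pgrad p (Fp C) \<bullet> vF C) / (bm C * (nb C \<bullet> vF C))"
definition ext :: "cfg \<Rightarrow> poly2 \<Rightarrow> poly2" where
  "ext C p = p + kap C p *\<^sub>R lin (nb C) (Dp C)"
definition pair :: "cfg \<Rightarrow> poly2 \<Rightarrow> sgn \<Rightarrow> poly2" where
  "pair C p s = (if s = Pos then p else ext C p)"

lemma tup_arith: "(a,b,c,d) + k *\<^sub>R (a2,b2,c2,d2) = (a + k*a2, b + k*b2, c+k*c2, d+k*d2)"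
  by simp

lemma ife_pair:
  assumes bm: "bm C > 0" and nv: "nb C \<bullet> vF C \<noteq> 0" and DE: "Dp C \<noteq> Ep C"
    and perp: "nb C \<bullet> (Ep C - Dp C) = 0" and nn: "norm (nb C) = 1" and q: "is_ife C q"
  shows "q Neg = ext C (q Pos)"
proof -
  obtain a b c d where qp: "q Pos = (a,b,c,d)" by (cases "q Pos") auto
  obtain a' b' c' d' where qn: "q Neg = (a',b',c',d')" by (cases "q Neg") auto
  have dd: "d' = d"
    using q by (cases "rect C") (auto simp: is_ife_def qp qn pdxx_def PiT_def)
  have "peval (q Neg) (Dp C) = peval (q Pos) (Dp C)" "peval (q Neg) (Ep C) = peval (q Pos) (Ep C)"
    using q by (auto simp: is_ife_def)
  then have eD: "(a'-a) + (b'-b)*Dp C$1 + (c'-c)*Dp C$2 = 0"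
    and eE: "(a'-a) + (b'-b)*Ep C$1 + (c'-c)*Ep C$2 = 0"
    by (simp_all add: qp qn dd peval_def algebra_simps)
  define n1 where "n1 = nb C $ 1"
  define n2 where "n2 = nb C $ 2"
  define k where "k = (b'-b)*n1 + (c'-c)*n2"
  have n12: "n1^2 + n2^2 = 1"
    using nn unfolding n1_def n2_def by (simp add: norm_eq_1 inner2 power2_eq_square)
  have w: "Ep C $ 1 - Dp C $ 1 \<noteq> 0 \<or> Ep C $ 2 - Dp C $ 2 \<noteq> 0"
    using DE by (auto simp add: vec2_eq)
  have pp: "(b'-b) = k*n1 \<and> (c'-c) = k*n2"
    unfolding k_def
    apply (rule perp2[OF _ _ w n12])
    using eD eE apply (simp add: algebra_simps)
    using perp apply (simp add: inner2 n1_def n2_def algebra_simps)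
    done
  have aa: "a' - a = - k * (nb C \<bullet> Dp C)"
    using eD pp by (simp add: inner2 n1_def n2_def algebra_simps)
  have gn: "pgrad (q Neg) (Fp C) = pgrad (q Pos) (Fp C) + k *\<^sub>R nb C"
    using pp by (simp add: qp qn dd pgrad_def vec2_eq n1_def n2_def algebra_simps)
  have J2: "bm C * (pgrad (q Neg) (Fp C) \<bullet> vF C) = bp C * (pgrad (q Pos) (Fp C) \<bullet> vF C)"
    using q by (simp add: is_ife_def)
  then have "bm C * k * (nb C \<bullet> vF C) = (bp C - bm C) * (pgrad (q Pos) (Fp C) \<bullet> vF C)"
    unfolding gn by (simp add: inner_add_left algebra_simps)
  then have kk: "k = kap C (q Pos)"
    unfolding kap_def using bm nv by (simp add: field_simps)
  show ?thesis
    using pp aa dd kk by (simp add: ext_def qp qn lin_def n1_def n2_def algebra_simps)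
qed


definition wn :: "cfg \<Rightarrow> nat \<Rightarrow> real^2" where
  "wn C i = pt (V C (Suc i) $ 2 - V C i $ 2) (V C i $ 1 - V C (Suc i) $ 1)"

lemma supp_all:
  assumes "hx C > 0" "hy C > 0" "cutc C < 4" "i < NN C" "j < NN C"
  shows "wn C i \<bullet> (V C j - V C i) \<le> 0 \<and> (wn C i \<bullet> (V C j - V C i) = 0 \<longrightarrow> j = i \<or> j = Suc i mod NN C)"
proof (cases "rect C")
  case True
  then have "i = 0 \<or> i = 1 \<or> i = 2 \<or> i = 3" "j = 0 \<or> j = 1 \<or> j = 2 \<or> j = 3" using assms by (auto simp: NN_def)
  then show ?thesis using True assms(1,2)
    by (elim disjE; simp add: NN_def wn_def V_def corner_def inner2)
next
  case False
  then have "i = 0 \<or> i = 1 \<or> i = 2" "j = 0 \<or> j = 1 \<or> j = 2" "cutc C = 0 \<or> cutc C = 1 \<or> cutc C = 2 \<or> cutc C = 3" using assms by (auto simp: NN_def)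
  then show ?thesis using False assms(1,2)
    by (elim disjE; simp add: NN_def wn_def V_def corner_def inner2)
qed

lemma NN_pos: "0 < NN C" by (simp add: NN_def)

lemma V_mod: "V C (i mod NN C) = V C i"
  by (simp add: V_def NN_def)

lemma V_Suc_in: "V C (Suc i) \<in> V C ` {..<NN C}"
  using V_mod[of C "Suc i"] NN_pos[of C] by (metis image_eqI lessThan_iff mod_less_divisor)

lemma V_in: "V C i \<in> V C ` {..<NN C}"
  using V_mod[of C i] NN_pos[of C] by (metis image_eqI lessThan_iff mod_less_divisor)

lemma wn_dir: "wn C i \<bullet> (V C (Suc i) - V C i) = 0"
  by (simp add: wn_def inner2 algebra_simps)

lemma Tset_half:
  assumes "hx C > 0" "hy C > 0" "cutc C < 4" "i < NN C" "X \<in> Tset C"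
  shows "wn C i \<bullet> (X - V C i) \<le> 0"
proof -
  have "V C ` {..<NN C} \<subseteq> {X. wn C i \<bullet> X \<le> wn C i \<bullet> V C i}"
    using supp_all[OF assms(1-4)] by (force simp: inner_diff_right)
  then have "Tset C \<subseteq> {X. wn C i \<bullet> X \<le> wn C i \<bullet> V C i}"
    unfolding Tset_def by (intro hull_minimal) (auto simp: convex_halfspace_le)
  then show ?thesis using assms(5) by (auto simp: inner_diff_right)
qed

lemma convex_Tset: "convex (Tset C)" by (simp add: Tset_def convex_convex_hull)
lemma compact_Tset: "compact (Tset C)"
  by (simp add: Tset_def compact_convex_hull finite_imp_compact)

lemma edge_sub_T: "edge C i \<subseteq> Tset C"
  unfolding edge_def Tset_def
  by (intro closed_segment_subset_convex_hull) (auto intro: hull_inc V_in V_Suc_in)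

lemma edge_on_line:
  assumes "X \<in> edge C i" shows "wn C i \<bullet> (X - V C i) = 0"
proof -
  obtain u where "X = (1 - u) *\<^sub>R V C i + u *\<^sub>R V C (Suc i)"
    using assms by (auto simp: edge_def in_segment)
  then have "X - V C i = u *\<^sub>R (V C (Suc i) - V C i)" by (simp add: algebra_simps)
  then show ?thesis using wn_dir[of C i] by simp
qed

lemma V_ne:
  assumes "hx C > 0" "hy C > 0" "cutc C < 4"
  shows "V C i \<noteq> V C (Suc i)"
proof (cases "rect C")
  case True
  have "i mod 4 = 0 \<or> i mod 4 = 1 \<or> i mod 4 = 2 \<or> i mod 4 = 3" by auto
  moreover have "Suc i mod 4 = Suc (i mod 4) mod 4" by (simp add: mod_Suc)
  ultimately show ?thesis using True assms
    by (elim disjE; simp add: V_def corner_def vec2_eq)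
next
  case False
  have "i mod 3 = 0 \<or> i mod 3 = 1 \<or> i mod 3 = 2" by auto
  moreover have "Suc i mod 3 = Suc (i mod 3) mod 3" by (simp add: mod_Suc)
  moreover have "cutc C = 0 \<or> cutc C = 1 \<or> cutc C = 2 \<or> cutc C = 3" using assms by auto
  ultimately show ?thesis using False assms
    by (elim disjE; simp add: V_def corner_def vec2_eq)
qed

lemma wn_ne:
  assumes "V C i \<noteq> V C (Suc i)" shows "wn C i \<noteq> 0"
  using assms by (auto simp: wn_def vec2_eq)

lemma edge_frontier:
  assumes "hx C > 0" "hy C > 0" "cutc C < 4" "i < NN C"
  shows "edge C i \<subseteq> frontier (Tset C)"
proof
  fix X assume X: "X \<in> edge C i"
  have XT: "X \<in> Tset C" using X edge_sub_T by blast
  have w0: "wn C i \<noteq> 0" using wn_ne V_ne assms(1-3) by blast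
  have "X \<notin> interior (Tset C)"
  proof
    assume "X \<in> interior (Tset C)"
    then obtain e where e: "e > 0" "ball X e \<subseteq> Tset C" by (auto simp: mem_interior)
    define Y where "Y = X + (e / 2 / norm (wn C i)) *\<^sub>R wn C i"
    have "dist X Y < e" using e w0 by (simp add: Y_def dist_norm)
    then have "Y \<in> Tset C" using e by auto
    then have "wn C i \<bullet> (Y - V C i) \<le> 0" using Tset_half assms by blast
    moreover have "wn C i \<bullet> (Y - V C i) = (e / 2 / norm (wn C i)) * (wn C i \<bullet> wn C i)"
      using edge_on_line[OF X] by (simp add: Y_def algebra_simps inner_diff_right inner_add_right)
    moreover have "(e / 2 / norm (wn C i)) * (wn C i \<bullet> wn C i) > 0"
      using e w0 by simp
    ultimately show False by linarith
  qed
  then show "X \<in> frontier (Tset C)"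
    using XT closure_subset by (auto simp: frontier_def)
qed



lemma face_edge:
  assumes "hx C > 0" "hy C > 0" "cutc C < 4" "i < NN C" "X \<in> Tset C" "wn C i \<bullet> (X - V C i) = 0"
  shows "X \<in> edge C i"
proof -
  let ?H = "{X. wn C i \<bullet> X = wn C i \<bullet> V C i}"
  have hs: "\<And>x. x \<in> Tset C \<Longrightarrow> wn C i \<bullet> x \<le> wn C i \<bullet> V C i"
    using Tset_half[OF assms(1-4)] by (simp add: inner_diff_right)
  have fc: "(Tset C \<inter> ?H) face_of Tset C"
    by (rule face_of_Int_supporting_hyperplane_le[OF convex_Tset hs])
  have cpt: "compact (V C ` {..<NN C})" by (simp add: finite_imp_compact)
  obtain S' where S': "S' \<subseteq> V C ` {..<NN C}" "Tset C \<inter> ?H = convex hull S'"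
  proof -
    have fc': "(Tset C \<inter> ?H) face_of convex hull (V C ` {..<NN C})"
      unfolding Tset_def[symmetric] by (rule fc)
    show ?thesis using face_of_convex_hull_subset[OF cpt fc'] that by blast
  qed
  have "S' \<subseteq> {V C i, V C (Suc i)}"
  proof
    fix Y assume Y: "Y \<in> S'"
    then obtain j where j: "j < NN C" "Y = V C j" using S'(1) by auto
    have "Y \<in> convex hull S'" by (rule hull_inc[OF Y])
    then have "Y \<in> Tset C \<inter> ?H" by (simp only: S'(2))
    then have "wn C i \<bullet> (V C j - V C i) = 0" using j by (simp add: inner_diff_right)
    then have "j = i \<or> j = Suc i mod NN C" using supp_all[OF assms(1-4) j(1)] by blast
    then show "Y \<in> {V C i, V C (Suc i)}" using j V_mod by auto
  qed
  then have "Tset C \<inter> ?H \<subseteq> closed_segment (V C i) (V C (Suc i))"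
    unfolding S'(2) segment_convex_hull by (rule hull_mono)
  then show ?thesis using assms(5,6) by (auto simp: edge_def inner_diff_right)
qed


definition seg :: "real^2 \<Rightarrow> real^2 \<Rightarrow> real \<Rightarrow> real^2" where
  "seg A B t = A + t *\<^sub>R (B - A)"

lemma cont_seg[continuous_intros]: "continuous_on S (seg A B)"
  unfolding seg_def by (intro continuous_intros)

lemma integ_if:
  fixes f g :: "real \<Rightarrow> real"
  assumes U: "open U" and f: "continuous_on {0..1} f" and g: "continuous_on {0..1} g"
  shows "(\<lambda>t. if seg A B t \<in> U then f t else g t) integrable_on {0..1}"
proof -
  let ?S = "{t. seg A B t \<in> U}"
  have "open (seg A B -` U)"
    by (rule continuous_open_vimage[OF U]) (use cont_seg[of UNIV A B] in \<open>simp add: continuous_on_eq_continuous_at\<close>)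
  then have oS: "open ?S" by (simp add: vimage_def)
  then have "?S \<in> sets lebesgue" by auto
  then have "?S \<inter> {0..1} \<in> sets (lebesgue_on {0..1::real})"
    by (simp add: sets_restrict_space_iff sets.Int)
  then have m: "(indicator ?S :: real \<Rightarrow> real) \<in> borel_measurable (lebesgue_on {0..1::real})"
    by (subst borel_measurable_indicator_iff) (simp add: space_restrict_space Int_commute)
  have "(\<lambda>t. indicator ?S t * (f t - g t)) absolutely_integrable_on {0..1}"
  proof (rule absolutely_integrable_bounded_measurable_product_real[OF m])
    show "{0..1::real} \<in> sets lebesgue" by simp
    show "bounded ((indicator ?S :: real \<Rightarrow> real) ` {0..1})"
      by (rule bounded_subset[OF finite_imp_bounded[of "{0::real,1}"]]) (auto simp: indicator_def)
    show "(\<lambda>t. f t - g t) absolutely_integrable_on {0..1}"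
      using f g by (intro absolutely_integrable_continuous_real continuous_intros)
  qed
  then have i1: "(\<lambda>t. indicator ?S t * (f t - g t)) integrable_on {0..1}"
    using set_lebesgue_integral_eq_integral(1) by blast
  have i2: "g integrable_on {0..1}" using g by (rule integrable_continuous_real)
  have "(\<lambda>t. g t + indicator ?S t * (f t - g t)) integrable_on {0..1}"
    using integrable_add[OF i2 i1] by simp
  then show ?thesis
    by (rule integrable_eq) (auto simp: indicator_def)
qed



lemma peval_add: "peval (x + y) X = peval x X + peval y X"
  by (cases x; cases y) (simp add: peval_def algebra_simps)
lemma peval_scale: "peval (c *\<^sub>R x) X = c * peval x X"
  by (cases x) (simp add: peval_def algebra_simps)
lemma pgrad_add: "pgrad (x + y) X = pgrad x X + pgrad y X"
  by (cases x; cases y) (simp add: pgrad_def vec2_eq algebra_simps)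
lemma pgrad_scale: "pgrad (c *\<^sub>R x) X = c *\<^sub>R pgrad x X"
  by (cases x) (simp add: pgrad_def vec2_eq algebra_simps)
lemma linear_peval: "linear (\<lambda>p. peval p X)"
  by (rule linearI) (simp_all add: peval_add peval_scale)
lemma peval_sum: "peval (sum f S) X = (\<Sum>i\<in>S. peval (f i) X)"
  using linear_sum[OF linear_peval, of f S X] by (simp add: o_def)

lemma kap_add: "kap C (x + y) = kap C x + kap C y"
  unfolding kap_def pgrad_add inner_add_left by (simp only: distrib_left add_divide_distrib)
lemma kap_scale: "kap C (c *\<^sub>R x) = c * kap C x"
  by (simp add: kap_def pgrad_scale)
lemma ext_add: "ext C (x + y) = ext C x + ext C y"
  by (simp add: ext_def kap_add scaleR_add_left algebra_simps)
lemma ext_scale: "ext C (c *\<^sub>R x) = c *\<^sub>R ext C x"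
  by (simp add: ext_def kap_scale scaleR_add_right)
lemma linear_pair: "linear (\<lambda>p. pair C p s)"
  by (rule linearI) (simp_all add: pair_def ext_add ext_scale)
lemma pair_sum: "pair C (sum f S) s = (\<Sum>i\<in>S. pair C (f i) s)"
  using linear_sum[OF linear_pair[of C s], of f S] by (simp add: o_def)

lemma ife_pair_add: "ife_fun C (pair C (x + y)) X = ife_fun C (pair C x) X + ife_fun C (pair C y) X"
  by (simp add: ife_fun_def pair_def ext_add peval_add)
lemma ife_pair_scale: "ife_fun C (pair C (c *\<^sub>R x)) X = c * ife_fun C (pair C x) X"
  by (simp add: ife_fun_def pair_def ext_scale peval_scale)

lemma seg_int_seg: "seg_int A B f = dist A B *\<^sub>R integral {0..1} (\<lambda>t. f (seg A B t))"
  by (simp add: seg_int_def seg_def)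

lemma seg_in_edge: "t \<in> {0..1} \<Longrightarrow> seg (V C j) (V C (Suc j)) t \<in> edge C j"
  unfolding edge_def in_segment seg_def
  by (rule exI[of _ t]) (auto simp: algebra_simps)

lemma cont_peval[continuous_intros]: "continuous_on S (\<lambda>t. peval p (seg A B t))"
  by (cases p) (auto simp: peval_def seg_def intro!: continuous_intros)

lemma integ_ife:
  assumes "open U" "Tp C Pos = Tset C \<inter> U"
  shows "(\<lambda>t. ife_fun C q (seg (V C j) (V C (Suc j)) t)) integrable_on {0..1}"
proof -
  have "(\<lambda>t. if seg (V C j) (V C (Suc j)) t \<in> U then peval (q Pos) (seg (V C j) (V C (Suc j)) t)
         else peval (q Neg) (seg (V C j) (V C (Suc j)) t)) integrable_on {0..1}"
    by (rule integ_if[OF assms(1)]) (intro continuous_intros)+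
  then show ?thesis
  proof (rule integrable_eq)
    fix t :: real assume "t \<in> {0..1}"
    then have "seg (V C j) (V C (Suc j)) t \<in> Tset C" using seg_in_edge edge_sub_T by blast
    then show "(if seg (V C j) (V C (Suc j)) t \<in> U then peval (q Pos) (seg (V C j) (V C (Suc j)) t)
         else peval (q Neg) (seg (V C j) (V C (Suc j)) t)) = ife_fun C q (seg (V C j) (V C (Suc j)) t)"
      using assms(2) by (simp add: ife_fun_def)
  qed
qed

definition aj :: "cfg \<Rightarrow> nat \<Rightarrow> poly2 \<Rightarrow> real" where
  "aj C j p = edge_avg C j (ife_fun C (pair C p))"

definition GG :: "cfg \<Rightarrow> poly2 \<Rightarrow> poly2" where
  "GG C p = (aj C 0 p, aj C 1 p, aj C 2 p, if rect C then aj C 3 p else snd (snd (snd p)))"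

lemma aj_add:
  assumes "open U" "Tp C Pos = Tset C \<inter> U"
  shows "aj C j (x + y) = aj C j x + aj C j y"
  unfolding aj_def edge_avg_def seg_int_seg ife_pair_add
  by (simp add: integral_add[OF integ_ife[OF assms] integ_ife[OF assms]] add_divide_distrib algebra_simps)

lemma aj_scale: "aj C j (c *\<^sub>R x) = c * aj C j x"
  unfolding aj_def edge_avg_def seg_int_seg ife_pair_scale by simp

lemma linear_GG:
  assumes "open U" "Tp C Pos = Tset C \<inter> U"
  shows "linear (GG C)"
  by (rule linearI) (simp_all add: GG_def aj_add[OF assms] aj_scale)

lemma ife_fun_pair:
  assumes "q Neg = ext C (q Pos)"
  shows "ife_fun C q = ife_fun C (pair C (q Pos))"
  using assms by (simp add: ife_fun_def pair_def fun_eq_iff)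


locale unis =
  fixes C :: cfg and phi :: "nat \<Rightarrow> sgn \<Rightarrow> poly2" and U :: "(real^2) set"
  assumes bm: "bm C > 0" and nv: "nb C \<bullet> vF C > 0"
    and DE: "Dp C \<noteq> Ep C" and perp: "nb C \<bullet> (Ep C - Dp C) = 0" and nn: "norm (nb C) = 1"
    and U: "open U" "Tp C Pos = Tset C \<inter> U"
    and basis: "\<forall>i<NN C. is_ife C (phi i)"
      "\<forall>i<NN C. \<forall>j<NN C. edge_avg C j (ife_fun C (phi i)) = (if i = j then 1 else 0)"
begin

lemma ifeP: "is_ife C q \<Longrightarrow> q Neg = ext C (q Pos)"
  by (rule ife_pair[OF bm _ DE perp nn]) (use nv in auto)

lemma ife_eq_pair: "is_ife C q \<Longrightarrow> ife_fun C q = ife_fun C (pair C (q Pos))"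
  by (rule ife_fun_pair[OF ifeP])

lemma is_ife_pair: assumes "is_ife C q" shows "q = pair C (q Pos)"
proof (rule ext)
  fix s
  show "q s = pair C (q Pos) s" by (cases s) (simp_all add: pair_def ifeP[OF assms])
qed

lemma lin: "linear (GG C)" by (rule linear_GG[OF U])

lemma GG_add: "GG C (x + y) = GG C x + GG C y" using lin by (simp add: linear_add)
lemma GG_scale: "GG C (c *\<^sub>R x) = c *\<^sub>R GG C x" using lin by (simp add: linear_scale)
lemma GG_diff: "GG C (x - y) = GG C x - GG C y" using lin by (simp add: linear_diff)

lemma aj_phi: "i < NN C \<Longrightarrow> j < NN C \<Longrightarrow> aj C j (phi i Pos) = (if i = j then 1 else 0)"
proof -
  assume ij: "i < NN C" "j < NN C"
  have "is_ife C (phi i)" using basis(1) ij by blast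
  then have "ife_fun C (pair C (phi i Pos)) = ife_fun C (phi i)" by (simp add: ife_eq_pair)
  then show ?thesis using basis(2) ij by (simp add: aj_def)
qed

lemma d_phi: "\<not> rect C \<Longrightarrow> i < NN C \<Longrightarrow> snd (snd (snd (phi i Pos))) = 0"
  using basis(1) by (auto simp: is_ife_def PiT_def)

lemma surjG: "surj (GG C)"
proof -
  have "\<exists>p. GG C p = y" for y
  proof -
    obtain y0 y1 y2 y3 where y: "y = (y0, y1, y2, y3)" by (cases y) auto
    show ?thesis
    proof (cases "rect C")
      case True
      then have N: "NN C = 4" by (simp add: NN_def)
      let ?p = "y0 *\<^sub>R phi 0 Pos + y1 *\<^sub>R phi 1 Pos + y2 *\<^sub>R phi 2 Pos + y3 *\<^sub>R phi 3 Pos"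
      have "GG C ?p = y"
        unfolding GG_add GG_scale using True N aj_phi
        by (simp add: y GG_def)
      then show ?thesis by blast
    next
      case False
      then have N: "NN C = 3" by (simp add: NN_def)
      define e where "e = ((0::real), (0::real), (0::real), (1::real))"
      define p3 where "p3 = e - (aj C 0 e *\<^sub>R phi 0 Pos + aj C 1 e *\<^sub>R phi 1 Pos + aj C 2 e *\<^sub>R phi 2 Pos)"
      have G3: "GG C p3 = (0, 0, 0, 1)"
        unfolding p3_def GG_diff GG_add GG_scale using False N aj_phi d_phi[OF False]
        by (simp add: GG_def e_def)
      let ?p = "y0 *\<^sub>R phi 0 Pos + y1 *\<^sub>R phi 1 Pos + y2 *\<^sub>R phi 2 Pos + y3 *\<^sub>R p3"
      have "GG C ?p = y"
        unfolding GG_add GG_scale G3 using False N aj_phi d_phi[OF False]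
        by (simp add: y GG_def)
      then show ?thesis by blast
    qed
  qed
  then show ?thesis by (metis surjI)
qed

lemma injG: "inj (GG C)"
  by (rule linear_surj_imp_inj[OF lin surjG])

lemma unisolv:
  assumes q: "is_ife C q" and q': "is_ife C q'"
    and avg: "\<forall>j<NN C. edge_avg C j (ife_fun C q) = edge_avg C j (ife_fun C q')"
  shows "q = q'"
proof -
  have a: "aj C j (q Pos) = aj C j (q' Pos)" if "j < NN C" for j
    using avg that ife_eq_pair[OF q] ife_eq_pair[OF q'] by (simp add: aj_def)
  have "GG C (q Pos) = GG C (q' Pos)"
  proof (cases "rect C")
    case True then show ?thesis using a by (simp add: GG_def NN_def)
  next
    case False
    then have "snd (snd (snd (q Pos))) = 0" "snd (snd (snd (q' Pos))) = 0"
      using q q' by (auto simp: is_ife_def PiT_def)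
    then show ?thesis using a False by (simp add: GG_def NN_def)
  qed
  then have "q Pos = q' Pos" using injG by (simp add: inj_eq)
  then show ?thesis using is_ife_pair[OF q] is_ife_pair[OF q'] by metis
qed

end



lemma seg_limpt:
  fixes A B X :: "real^2"
  assumes "A \<noteq> B" "X \<in> closed_segment A B"
  shows "X islimpt closed_segment A B"
proof (unfold islimpt_approachable, intro allI impI)
  fix e :: real assume e: "e > 0"
  obtain u where u: "0 \<le> u" "u \<le> 1" "X = A + u *\<^sub>R (B - A)"
    using assms(2) by (auto simp: in_segment algebra_simps)
  have nB: "norm (B - A) > 0" using assms(1) by simp
  define d where "d = min (1/2) (e / (2 * norm (B - A)))"
  have d: "d > 0" "d \<le> 1/2" "d * norm (B - A) < e"
    using e nB by (auto simp: d_def min_def field_simps)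
  define v where "v = (if u \<le> 1/2 then u + d else u - d)"
  have v: "0 \<le> v" "v \<le> 1" "v \<noteq> u" "\<bar>v - u\<bar> = d" using d u by (auto simp: v_def)
  let ?Y = "A + v *\<^sub>R (B - A)"
  have "?Y \<in> closed_segment A B"
    unfolding in_segment by (rule exI[of _ v]) (use v in \<open>auto simp: algebra_simps\<close>)
  moreover have "?Y \<noteq> X"
  proof
    assume "?Y = X"
    then have "(v - u) *\<^sub>R (B - A) = 0" using u by (simp add: algebra_simps)
    then show False using v assms(1) by simp
  qed
  moreover have "dist ?Y X < e"
  proof -
    have "?Y - X = (v - u) *\<^sub>R (B - A)" using u by (simp add: algebra_simps)
    then have "dist ?Y X = d * norm (B - A)" using v by (simp add: dist_norm)
    then show ?thesis using d by simp
  qed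
  ultimately show "\<exists>x'\<in>closed_segment A B. x' \<noteq> X \<and> dist x' X < e" by blast
qed

lemma closure_seg_diff:
  fixes A B X :: "real^2"
  assumes "A \<noteq> B" "X \<in> closed_segment A B" "finite F" "closed_segment A B - F \<subseteq> S"
  shows "X \<in> closure S"
proof -
  have "X islimpt (F \<union> (closed_segment A B - F))"
    using seg_limpt[OF assms(1,2)] by (rule islimpt_subset) auto
  then have "X islimpt (closed_segment A B - F)" using islimpt_Un_finite[OF assms(3)] by blast
  then have "X islimpt S" using assms(4) by (rule islimpt_subset)
  then show ?thesis by (simp add: closure_def)
qed

lemma opp_opp[simp]: "opp (opp s) = s" by (cases s) auto
lemma opp_ne[simp]: "opp s \<noteq> s" by (cases s) auto

locale mloc =
  fixes C :: cfg and phi :: "nat \<Rightarrow> sgn \<Rightarrow> poly2" and Xb :: "nat \<Rightarrow> real^2"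
  assumes hx: "hx C > 0" and hy: "hy C > 0" and cc: "cutc C < 4"
    and bp: "bp C > 0" and bm: "bm C > 0"
    and opP: "open (Om C Pos)" and opN: "open (Om C Neg)"
    and disj: "Om C Pos \<inter> Om C Neg = {}"
    and cover: "Tset C \<subseteq> Om C Pos \<union> Om C Neg \<union> Gam C"
    and GF: "Gam C \<inter> frontier (Tset C) = {Dp C, Ep C}"
    and DE: "Dp C \<noteq> Ep C"
    and H2: "\<not> (\<exists>i<NN C. Dp C \<in> edge C i \<and> Ep C \<in> edge C i)"
    and nn: "norm (nb C) = 1" and perp: "nb C \<bullet> (Ep C - Dp C) = 0"
    and sides: "\<exists>\<sigma>::real. \<sigma> \<noteq> 0
      \<and> (\<forall>Q \<in> frontier (Tset C) \<inter> closure (Tsg C Pos). \<sigma> * (nb C \<bullet> (Q - Dp C)) \<ge> 0)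
      \<and> (\<forall>Q \<in> frontier (Tset C) \<inter> closure (Tsg C Neg). \<sigma> * (nb C \<bullet> (Q - Dp C)) \<le> 0)"
    and vcur: "curve C \<Longrightarrow> nb C \<bullet> vF C > 0"
    and vlin: "\<not> curve C \<Longrightarrow> vF C = nb C"
    and basis: "\<forall>i<NN C. is_ife C (phi i)"
      "\<forall>i<NN C. \<forall>j<NN C. edge_avg C j (ife_fun C (phi i)) = (if i = j then 1 else 0)"
    and Xbar: "\<forall>i<NN C. Xb i \<in> closed_segment (Dp C) (Ep C)"
begin

lemma nv: "nb C \<bullet> vF C > 0"
proof (cases "curve C")
  case True then show ?thesis by (rule vcur)
next
  case False then show ?thesis using vlin nn by (simp add: inner_commute norm_eq_1)
qed

lemma op_s: "open (Om C s)" using opP opN by (cases s) auto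

lemma disj_s: "Om C s \<inter> Om C (opp s) = {}" using disj by (cases s) auto

lemma Om_cl: "Om C s \<inter> closure (Om C (opp s)) = {}"
  using disj_s[of s] op_s[of s] by (simp add: open_Int_closure_eq_empty)

lemma Tsg_Om: "Tsg C s \<subseteq> Om C s" by (auto simp: Tsg_def)

lemma Tsg_cl: "Tsg C s \<inter> closure (Tsg C (opp s)) = {}"
  using Om_cl[of s] Tsg_Om[of s] closure_mono[OF Tsg_Om[of "opp s"]] by blast

lemma TpU: "\<exists>U. open U \<and> Tp C Pos = Tset C \<inter> U"
proof (cases "curve C")
  case True then show ?thesis using opP by (auto simp: Tp_def Tsg_def)
next
  case False
  let ?K = "frontier (Tset C) \<inter> closure (Tsg C Pos)"
  let ?U = "\<Union>Q\<in>?K. {X. 0 < (nb C \<bullet> (X - Dp C)) * (nb C \<bullet> (Q - Dp C))}"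
  have "open ?U" by (intro open_UN ballI open_Collect_less continuous_intros)
  moreover have "Tp C Pos = Tset C \<inter> ?U" using False by (auto simp: Tp_def)
  ultimately show ?thesis by blast
qed

lemma DE_T: "Dp C \<in> Tset C" "Ep C \<in> Tset C"
  using GF frontier_subset_closed[OF compact_imp_closed[OF compact_Tset]] by blast+

lemma line_fin:
  assumes "\<not> curve C" "i < NN C"
  shows "finite {X \<in> edge C i. nb C \<bullet> (X - Dp C) = 0}"
proof -
  let ?A = "V C i" and ?B = "V C (Suc i)"
  let ?c = "nb C \<bullet> (?B - ?A)"
  have pt: "X = ?A + u *\<^sub>R (?B - ?A)" if "X = (1 - u) *\<^sub>R ?A + u *\<^sub>R ?B" for X u
    using that by (simp add: algebra_simps)
  have gX: "nb C \<bullet> (X - Dp C) = nb C \<bullet> (?A - Dp C) + u * ?c" if "X = ?A + u *\<^sub>R (?B - ?A)" for X u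
    unfolding that by (simp add: inner_diff_right inner_add_right algebra_simps)
  show ?thesis
  proof (cases "?c = 0")
    case False
    have "{X \<in> edge C i. nb C \<bullet> (X - Dp C) = 0} \<subseteq> {?A + (- (nb C \<bullet> (?A - Dp C)) / ?c) *\<^sub>R (?B - ?A)}"
    proof
      fix X assume X: "X \<in> {X \<in> edge C i. nb C \<bullet> (X - Dp C) = 0}"
      then obtain u where u: "X = ?A + u *\<^sub>R (?B - ?A)" using pt by (auto simp: edge_def in_segment)
      then have "u = - (nb C \<bullet> (?A - Dp C)) / ?c" using gX[OF u] X False by (auto simp: field_simps)
      then show "X \<in> {?A + (- (nb C \<bullet> (?A - Dp C)) / ?c) *\<^sub>R (?B - ?A)}" using u by simp
    qed
    then show ?thesis by (rule finite_subset) simp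
  next
    case True
    show ?thesis
    proof (cases "nb C \<bullet> (?A - Dp C) = 0")
      case False
      have "{X \<in> edge C i. nb C \<bullet> (X - Dp C) = 0} = {}"
      proof (safe)
        fix X assume X: "X \<in> edge C i" "nb C \<bullet> (X - Dp C) = 0"
        then obtain u where u: "X = ?A + u *\<^sub>R (?B - ?A)" using pt by (auto simp: edge_def in_segment)
        show "X \<in> {}" using gX[OF u] X True False by simp
      qed
      then show ?thesis by (simp only: finite.emptyI)
    next
      case gA: True
      have AB: "?A \<noteq> ?B" using V_ne[OF hx hy cc] .
      have n12: "(nb C $ 1)^2 + (nb C $ 2)^2 = 1" using nn by (simp add: norm_eq_1 inner2 power2_eq_square)
      have wperp: "wn C i \<bullet> (?B - ?A) = 0" by (rule wn_dir)
      have "wn C i $ 1 = (wn C i \<bullet> nb C) * nb C $ 1 \<and> wn C i $ 2 = (wn C i \<bullet> nb C) * nb C $ 2"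
        unfolding inner2
        apply (rule perp2[of _ "(?B - ?A) $ 1" _ "(?B - ?A) $ 2"])
        using wperp True AB n12 by (auto simp: inner2 vec2_eq)
      then have wn_eq: "wn C i = (wn C i \<bullet> nb C) *\<^sub>R nb C" by (simp add: vec2_eq)
      have onl: "wn C i \<bullet> (P - ?A) = 0" if "nb C \<bullet> (P - Dp C) = 0" for P
      proof -
        have "nb C \<bullet> (P - ?A) = 0" using that gA by (simp add: inner_diff_right)
        then show ?thesis by (subst wn_eq) (simp add: inner_commute)
      qed
      have "Dp C \<in> edge C i"
        by (rule face_edge[OF hx hy cc assms(2) DE_T(1) onl]) simp
      moreover have "Ep C \<in> edge C i"
        by (rule face_edge[OF hx hy cc assms(2) DE_T(2) onl]) (use perp in simp)
      ultimately show ?thesis using H2 assms(2) by blast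
    qed
  qed
qed


lemma edge_two:
  assumes "i < NN C" "X \<in> edge C i" "X \<noteq> Dp C" "X \<noteq> Ep C"
  shows "X \<in> Tsg C Pos \<or> X \<in> Tsg C Neg"
proof -
  have XT: "X \<in> Tset C" using assms(2) edge_sub_T by blast
  have XF: "X \<in> frontier (Tset C)" using assms(2) edge_frontier[OF hx hy cc assms(1)] by blast
  have "X \<notin> Gam C" using GF XF assms(3,4) by blast
  then show ?thesis using XT cover by (auto simp: Tsg_def)
qed

lemma exc:
  assumes i: "i < NN C"
  shows "\<exists>F. finite F \<and> (\<forall>X \<in> edge C i - F. (X \<in> Tsg C Pos \<or> X \<in> Tsg C Neg)
            \<and> (X \<in> Tsg C Pos \<longrightarrow> X \<in> Tp C Pos) \<and> (X \<in> Tsg C Neg \<longrightarrow> X \<notin> Tp C Pos))"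
proof (cases "curve C")
  case True
  show ?thesis
    apply (rule exI[of _ "{Dp C, Ep C}"])
    using edge_two[OF i] True disj by (auto simp: Tp_def Tsg_def)
next
  case False
  obtain \<sigma> :: real where sg: "\<sigma> \<noteq> 0"
    "\<forall>Q \<in> frontier (Tset C) \<inter> closure (Tsg C Pos). \<sigma> * (nb C \<bullet> (Q - Dp C)) \<ge> 0"
    "\<forall>Q \<in> frontier (Tset C) \<inter> closure (Tsg C Neg). \<sigma> * (nb C \<bullet> (Q - Dp C)) \<le> 0"
    using sides by blast
  let ?F = "{Dp C, Ep C} \<union> {X \<in> edge C i. nb C \<bullet> (X - Dp C) = 0}"
  have fin: "finite ?F" using line_fin[OF False i] by simp
  have "\<forall>X \<in> edge C i - ?F. (X \<in> Tsg C Pos \<or> X \<in> Tsg C Neg)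
            \<and> (X \<in> Tsg C Pos \<longrightarrow> X \<in> Tp C Pos) \<and> (X \<in> Tsg C Neg \<longrightarrow> X \<notin> Tp C Pos)"
  proof (intro ballI conjI impI)
    fix X assume X: "X \<in> edge C i - ?F"
    then have g: "nb C \<bullet> (X - Dp C) \<noteq> 0" by auto
    have XT: "X \<in> Tset C" using X edge_sub_T by blast
    have XF: "X \<in> frontier (Tset C)" using X edge_frontier[OF hx hy cc i] by blast
    show "X \<in> Tsg C Pos \<or> X \<in> Tsg C Neg" using edge_two[OF i] X by blast
    { assume "X \<in> Tsg C Pos"
      then have "X \<in> frontier (Tset C) \<inter> closure (Tsg C Pos)" using XF closure_subset by blast
      moreover have "(nb C \<bullet> (X - Dp C)) * (nb C \<bullet> (X - Dp C)) > 0" using g by (simp add: zero_less_mult_iff less_le)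
      ultimately show "X \<in> Tp C Pos" using False XT by (auto simp: Tp_def)
    }
    { assume XN: "X \<in> Tsg C Neg"
      then have "X \<in> frontier (Tset C) \<inter> closure (Tsg C Neg)" using XF closure_subset by blast
      then have n: "\<sigma> * (nb C \<bullet> (X - Dp C)) < 0" using sg(3) g sg(1)
        by (metis less_eq_real_def mult_eq_0_iff)
      show "X \<notin> Tp C Pos"
      proof
        assume "X \<in> Tp C Pos"
        then obtain Q where Q: "Q \<in> frontier (Tset C) \<inter> closure (Tsg C Pos)"
          "(nb C \<bullet> (X - Dp C)) * (nb C \<bullet> (Q - Dp C)) > 0"
          using False by (auto simp: Tp_def)
        have q: "\<sigma> * (nb C \<bullet> (Q - Dp C)) \<ge> 0" using sg(2) Q(1) by blast
        have "(\<sigma> * (nb C \<bullet> (X - Dp C))) * (\<sigma> * (nb C \<bullet> (Q - Dp C))) \<le> 0"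
          using n q by (simp add: mult_nonpos_nonneg)
        moreover have "(\<sigma> * (nb C \<bullet> (X - Dp C))) * (\<sigma> * (nb C \<bullet> (Q - Dp C)))
           = (\<sigma> * \<sigma>) * ((nb C \<bullet> (X - Dp C)) * (nb C \<bullet> (Q - Dp C)))" by (simp add: algebra_simps)
        moreover have "(\<sigma> * \<sigma>) * ((nb C \<bullet> (X - Dp C)) * (nb C \<bullet> (Q - Dp C))) > 0"
        proof -
          have s2: "\<sigma> * \<sigma> > 0" using sg(1) by (cases "\<sigma> > 0") (auto simp: mult_neg_neg)
          show ?thesis by (rule mult_pos_pos[OF s2 Q(2)])
        qed
        ultimately show False by linarith
      qed
    }
  qed
  then show ?thesis using fin by blast
qed

end



definition UUo :: "cfg \<Rightarrow> (real^2) set" where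
  "UUo C = (SOME U. open U \<and> Tp C Pos = Tset C \<inter> U)"

context mloc begin
lemma UU: "open (UUo C)" "Tp C Pos = Tset C \<inter> UUo C"
  using someI_ex[OF TpU] by (auto simp: UUo_def)
end

sublocale mloc \<subseteq> unis C phi "UUo C"
  by unfold_locales (use bm nv DE perp nn UU basis in auto)

lemma int_lin: "integral {0..1} (\<lambda>t::real. a + t * b) = a + b / 2"
proof -
  have i1: "(\<lambda>t::real. a) integrable_on {0..1}" by (intro integrable_continuous_real continuous_intros)
  have i2: "(\<lambda>t::real. t * b) integrable_on {0..1}" by (intro integrable_continuous_real continuous_intros)
  have "integral {0..1} (\<lambda>t::real. a + t * b) = integral {0..1} (\<lambda>t::real. a) + integral {0..1} (\<lambda>t::real. t * b)"
    by (rule integral_add[OF i1 i2])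
  moreover have c1: "integral {0..1} (\<lambda>t::real. a) = a" by (simp add: integral_const_real)
  moreover have c2: "integral {0..1} (\<lambda>t::real. t * b) = b / 2" by simp
  ultimately show ?thesis by linarith
qed

context mloc begin

abbreviation "gam i \<equiv> seg (V C i) (V C (Suc i))"

lemma elen_pos: "elen C i > 0"
  using V_ne[OF hx hy cc] by (simp add: elen_def)

lemma avg_int: "edge_avg C i f = integral {0..1} (\<lambda>t. f (gam i t))"
  using elen_pos[of i] by (simp add: edge_avg_def seg_int_seg elen_def)

lemma inj_gam: "inj (gam i)"
proof (rule injI)
  fix x y assume "gam i x = gam i y"
  then have "(x - y) *\<^sub>R (V C (Suc i) - V C i) = 0" by (simp add: seg_def algebra_simps)
  then show "x = y" using V_ne[OF hx hy cc, of i] by simp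
qed

lemma exc_t:
  assumes i: "i < NN C"
  obtains T0 where "finite T0" "\<And>t. t \<in> {0..1} - T0 \<Longrightarrow>
      (gam i t \<in> Tsg C Pos \<or> gam i t \<in> Tsg C Neg)
      \<and> (gam i t \<in> Tsg C Pos \<longrightarrow> gam i t \<in> Tp C Pos) \<and> (gam i t \<in> Tsg C Neg \<longrightarrow> gam i t \<notin> Tp C Pos)"
proof -
  obtain F where F: "finite F" "\<forall>X \<in> edge C i - F. (X \<in> Tsg C Pos \<or> X \<in> Tsg C Neg)
            \<and> (X \<in> Tsg C Pos \<longrightarrow> X \<in> Tp C Pos) \<and> (X \<in> Tsg C Neg \<longrightarrow> X \<notin> Tp C Pos)"
    using exc[OF i] by blast
  show ?thesis
  proof (rule that[of "gam i -` F"])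
    show "finite (gam i -` F)" by (rule finite_vimageI[OF F(1) inj_gam])
    fix t assume "t \<in> {0..1} - gam i -` F"
    then have "gam i t \<in> edge C i - F" using seg_in_edge by auto
    then show "(gam i t \<in> Tsg C Pos \<or> gam i t \<in> Tsg C Neg)
      \<and> (gam i t \<in> Tsg C Pos \<longrightarrow> gam i t \<in> Tp C Pos) \<and> (gam i t \<in> Tsg C Neg \<longrightarrow> gam i t \<notin> Tp C Pos)"
      using F(2) by blast
  qed
qed

lemma integ_ind:
  fixes h :: "real \<Rightarrow> real"
  assumes h: "continuous_on {0..1} h"
  shows "(\<lambda>t. indicator (Tsg C s) (gam i t) * h t) integrable_on {0..1}"
proof -
  have "(\<lambda>t. if gam i t \<in> Om C s then h t else 0) integrable_on {0..1}"
    by (rule integ_if[OF op_s h]) simp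
  then show ?thesis
  proof (rule integrable_eq)
    fix t :: real assume "t \<in> {0..1}"
    then have "gam i t \<in> Tset C" using seg_in_edge edge_sub_T by blast
    then show "(if gam i t \<in> Om C s then h t else 0) = indicator (Tsg C s) (gam i t) * h t"
      by (simp add: Tsg_def indicator_def)
  qed
qed

lemma avg_split:
  assumes i: "i < NN C"
  shows "edge_avg C i (ife_fun C q) = integral {0..1} (\<lambda>t. peval (q s) (gam i t))
     + integral {0..1} (\<lambda>t. indicator (Tsg C (opp s)) (gam i t) * (peval (q (opp s)) (gam i t) - peval (q s) (gam i t)))"
proof -
  obtain T0 where T0: "finite T0" "\<And>t. t \<in> {0..1} - T0 \<Longrightarrow>
      (gam i t \<in> Tsg C Pos \<or> gam i t \<in> Tsg C Neg)
      \<and> (gam i t \<in> Tsg C Pos \<longrightarrow> gam i t \<in> Tp C Pos) \<and> (gam i t \<in> Tsg C Neg \<longrightarrow> gam i t \<notin> Tp C Pos)"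
    using exc_t[OF i] by blast
  have eq: "ife_fun C q (gam i t) = peval (q s) (gam i t)
     + indicator (Tsg C (opp s)) (gam i t) * (peval (q (opp s)) (gam i t) - peval (q s) (gam i t))"
    if t: "t \<in> {0..1} - T0" for t
  proof -
    have dis: "gam i t \<notin> Tsg C s \<or> gam i t \<notin> Tsg C (opp s)"
      using Tsg_Om disj_s[of s] by blast
    show ?thesis using T0(2)[OF t] dis
      by (cases s) (auto simp: ife_fun_def indicator_def)
  qed
  have "edge_avg C i (ife_fun C q) = integral {0..1} (\<lambda>t. peval (q s) (gam i t)
     + indicator (Tsg C (opp s)) (gam i t) * (peval (q (opp s)) (gam i t) - peval (q s) (gam i t)))"
    unfolding avg_int
    by (rule integral_spike[OF negligible_finite[OF T0(1)]]) (simp add: eq)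
  also have "\<dots> = integral {0..1} (\<lambda>t. peval (q s) (gam i t))
     + integral {0..1} (\<lambda>t. indicator (Tsg C (opp s)) (gam i t) * (peval (q (opp s)) (gam i t) - peval (q s) (gam i t)))"
    by (rule integral_add) (auto intro!: integrable_continuous_real integ_ind continuous_intros)
  finally show ?thesis .
qed

lemma int_linp: "integral {0..1} (\<lambda>t. peval (lin w P) (gam i t)) = w \<bullet> (mid C i - P)"
proof -
  have "\<And>t. peval (lin w P) (gam i t) = w \<bullet> (V C i - P) + t * (w \<bullet> (V C (Suc i) - V C i))"
    by (simp add: seg_def inner_add_right inner_diff_right algebra_simps)
  then have "integral {0..1} (\<lambda>t. peval (lin w P) (gam i t)) = w \<bullet> (V C i - P) + (w \<bullet> (V C (Suc i) - V C i)) / 2"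
    by (simp add: int_lin)
  also have "\<dots> = w \<bullet> (mid C i - P)"
    by (simp add: mid_def midpoint_def inner_add_right inner_diff_right algebra_simps) (simp add: field_simps)
  finally show ?thesis .
qed


lemma aj_lin: "linear (aj C j)"
  by (rule linearI) (simp_all add: aj_add[OF UU] aj_scale)

lemma aj_sum: "aj C j (sum f S) = (\<Sum>i\<in>S. aj C j (f i))"
  using linear_sum[OF aj_lin[of j], of f S] by (simp add: o_def)

lemma d_sum: "snd (snd (snd (sum f S))) = (\<Sum>i\<in>S. snd (snd (snd (f i))))"
  by (simp add: snd_sum)

lemma interp:
  assumes q: "is_ife C q" and av: "\<forall>j<NN C. edge_avg C j (ife_fun C q) = c j"
  shows "q s = (\<Sum>i<NN C. c i *\<^sub>R phi i s)"
proof -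
  let ?p = "\<Sum>i<NN C. c i *\<^sub>R phi i Pos"
  have a1: "aj C j (q Pos) = c j" if "j < NN C" for j
    using av that ife_eq_pair[OF q] by (simp add: aj_def)
  have a2: "aj C j ?p = c j" if j: "j < NN C" for j
  proof -
    have "aj C j ?p = (\<Sum>i<NN C. c i * (if i = j then 1 else 0))"
      unfolding aj_sum aj_scale using aj_phi j by simp
    also have "\<dots> = c j" using j by (simp add: if_distrib cong: if_cong)
    finally show ?thesis .
  qed
  have "GG C (q Pos) = GG C ?p"
  proof (cases "rect C")
    case True then show ?thesis using a1 a2 by (simp add: GG_def NN_def)
  next
    case False
    have "snd (snd (snd (q Pos))) = 0" using q False by (auto simp: is_ife_def PiT_def)
    moreover have "snd (snd (snd ?p)) = 0"
      unfolding d_sum using d_phi[OF False] by simp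
    ultimately show ?thesis using a1 a2 False by (simp add: GG_def NN_def)
  qed
  then have "q Pos = ?p" using injG by (simp add: inj_eq)
  then have "q s = pair C ?p s" using is_ife_pair[OF q] by metis
  also have "\<dots> = (\<Sum>i<NN C. c i *\<^sub>R pair C (phi i Pos) s)"
    unfolding pair_sum using linear_scale[OF linear_pair] by simp
  also have "\<dots> = (\<Sum>i<NN C. c i *\<^sub>R phi i s)"
  proof (rule sum.cong[OF refl])
    fix i assume "i \<in> {..<NN C}"
    then have ii: "is_ife C (phi i)" using basis(1) by blast
    show "c i *\<^sub>R pair C (phi i Pos) s = c i *\<^sub>R phi i s"
      using fun_cong[OF is_ife_pair[OF ii], of s] by simp
  qed
  finally show ?thesis .
qed

end



context mloc begin

definition cs :: "sgn \<Rightarrow> real" where "cs s = (rr C s - 1) / (nb C \<bullet> vF C)"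

definition hf :: "sgn \<Rightarrow> nat \<Rightarrow> real \<Rightarrow> real" where
  "hf s i t = indicator (Tsg C (opp s)) (gam i t) * (nb C \<bullet> (gam i t - Dp C))"

definition Sc :: "sgn \<Rightarrow> nat \<Rightarrow> real" where "Sc s i = integral {0..1} (hf s i)"

lemma MT: "transpose (Mbar C s - mat 1) *v y = (cs s * (nb C \<bullet> y)) *\<^sub>R vF C"
  using Mbar_T[of C s y] nv by (simp add: cs_def)

lemma seg_perp: "X \<in> closed_segment (Dp C) (Ep C) \<Longrightarrow> nb C \<bullet> (X - Dp C) = 0"
proof -
  assume "X \<in> closed_segment (Dp C) (Ep C)"
  then obtain u where "X = (1 - u) *\<^sub>R Dp C + u *\<^sub>R Ep C" by (auto simp: in_segment)
  then have "X - Dp C = u *\<^sub>R (Ep C - Dp C)" by (simp add: algebra_simps)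
  then show ?thesis using perp by simp
qed

lemma Xb_perp: "i < NN C \<Longrightarrow> nb C \<bullet> (P - Xb i) = nb C \<bullet> (P - Dp C)"
proof -
  assume "i < NN C"
  then have "nb C \<bullet> (Xb i - Dp C) = 0" using Xbar seg_perp by blast
  then show ?thesis by (simp add: inner_diff_right)
qed

lemma integ_hf: "hf s i integrable_on {0..1}"
  unfolding hf_def
  by (rule integ_ind) (auto intro!: continuous_intros simp: seg_def)

lemma W_eq:
  assumes i: "i < NN C"
  shows "(1 / elen C i) *\<^sub>R seg_int (V C i) (V C (Suc i))
          (\<lambda>P. (indicator (Tsg C (opp s)) P :: real) *\<^sub>R (transpose (Mbar C s - mat 1) *v (P - Xb i)))
       = (cs s * Sc s i) *\<^sub>R vF C"
proof -
  have f: "(\<lambda>P. (indicator (Tsg C (opp s)) P :: real) *\<^sub>R (transpose (Mbar C s - mat 1) *v (P - Xb i)))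
      = (\<lambda>P. (cs s * (indicator (Tsg C (opp s)) P * (nb C \<bullet> (P - Dp C)))) *\<^sub>R vF C)"
    by (rule ext, subst MT, simp add: Xb_perp[OF i] mult.commute mult.left_commute)
  have hi: "(\<lambda>t. cs s * hf s i t) integrable_on {0..1}"
    using integrable_cmul[OF integ_hf[of s i], of "cs s"] by simp
  have "integral {0..1} (\<lambda>t. (cs s * hf s i t) *\<^sub>R vF C) = integral {0..1} (\<lambda>t. cs s * hf s i t) *\<^sub>R vF C"
    by (rule integral_unique[OF has_integral_scaleR_left[OF integrable_integral[OF hi]]])
  then show ?thesis
    unfolding f seg_int_seg using elen_pos[of i]
    by (simp add: hf_def[abs_def] Sc_def elen_def)
qed


definition Uk :: "sgn \<Rightarrow> 2 \<Rightarrow> sgn \<Rightarrow> poly2" where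
  "Uk s k = (\<lambda>\<sigma>. if \<sigma> = s then lin (axis k 1) (Dp C)
                 else lin (axis k 1 + (cs s * vF C $ k) *\<^sub>R nb C) (Dp C))"

lemma axis_inner: "axis k 1 \<bullet> (v::real^2) = v $ k"
proof -
  have "\<forall>k::2. axis k 1 \<bullet> v = v $ k" by (simp add: forall_2 inner2 axis_def)
  then show ?thesis by blast
qed

lemma Uk_ife: "is_ife C (Uk s k)"
proof -
  have nv0: "nb C \<bullet> vF C \<noteq> 0" using nv by simp
  have P: "lin w P \<in> PiT b" for w P b by (simp add: lin_def PiT_def)
  have d: "pdxx (lin w P) = 0" for w P by (simp add: lin_def pdxx_def)
  have J1: "peval (Uk s k Neg) X = peval (Uk s k Pos) X" if "X \<in> closed_segment (Dp C) (Ep C)" for X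
    using seg_perp[OF that] by (cases s) (simp_all add: Uk_def inner_add_left)
  have J2: "bm C * (pgrad (Uk s k Neg) (Fp C) \<bullet> vF C) = bp C * (pgrad (Uk s k Pos) (Fp C) \<bullet> vF C)"
  proof (cases s)
    case Pos
    have "bm C * ((axis k 1 + (cs Pos * vF C $ k) *\<^sub>R nb C) \<bullet> vF C) = bp C * (vF C $ k)"
      using nv0 bm by (simp add: inner_add_left axis_inner cs_def rr_def field_simps)
    then show ?thesis using Pos by (simp add: Uk_def axis_inner)
  next
    case Neg
    have "bp C * ((axis k 1 + (cs Neg * vF C $ k) *\<^sub>R nb C) \<bullet> vF C) = bm C * (vF C $ k)"
      using nv0 bp by (simp add: inner_add_left axis_inner cs_def rr_def field_simps)
    then show ?thesis using Neg by (simp add: Uk_def axis_inner)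
  qed
  show ?thesis unfolding is_ife_def
    using P J1 d J2 by (simp add: Uk_def)
qed

lemma Uk_avg:
  assumes j: "j < NN C"
  shows "edge_avg C j (ife_fun C (Uk s k)) = (mid C j - Dp C) $ k + cs s * Sc s j * vF C $ k"
proof -
  have d: "peval (Uk s k (opp s)) X - peval (Uk s k s) X = cs s * vF C $ k * (nb C \<bullet> (X - Dp C))" for X
    by (simp add: Uk_def inner_add_left)
  have "integral {0..1} (\<lambda>t. indicator (Tsg C (opp s)) (gam j t) *
           (peval (Uk s k (opp s)) (gam j t) - peval (Uk s k s) (gam j t)))
      = integral {0..1} (\<lambda>t. cs s * vF C $ k * hf s j t)"
    unfolding d hf_def by (simp add: algebra_simps)
  also have "\<dots> = cs s * vF C $ k * Sc s j" by (simp add: Sc_def)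
  finally have i2: "integral {0..1} (\<lambda>t. indicator (Tsg C (opp s)) (gam j t) *
           (peval (Uk s k (opp s)) (gam j t) - peval (Uk s k s) (gam j t))) = cs s * vF C $ k * Sc s j" .
  have "Uk s k s = lin (axis k 1) (Dp C)" by (simp add: Uk_def)
  then have i1: "integral {0..1} (\<lambda>t. peval (Uk s k s) (gam j t)) = (mid C j - Dp C) $ k"
    by (simp only: int_linp axis_inner)
  show ?thesis using avg_split[OF j, of "Uk s k" s] i1 i2 by simp
qed

definition Av :: "sgn \<Rightarrow> nat \<Rightarrow> real^2" where
  "Av s i = mid C i - Dp C + (cs s * Sc s i) *\<^sub>R vF C"

lemma Uk_interp: "(X - Dp C) $ k = (\<Sum>i<NN C. Av s i $ k * peval (phi i s) X)"
proof -
  have "Uk s k s = (\<Sum>i<NN C. (Av s i $ k) *\<^sub>R phi i s)"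
    by (rule interp[OF Uk_ife]) (simp add: Uk_avg Av_def)
  then have "peval (Uk s k s) X = (\<Sum>i<NN C. Av s i $ k * peval (phi i s) X)"
    by (simp add: peval_sum peval_scale)
  then show ?thesis by (simp add: Uk_def axis_inner)
qed

lemma one_interp: "(\<Sum>i<NN C. peval (phi i s) X) = 1"
proof -
  let ?q = "\<lambda>_::sgn. ((1::real), (0::real), (0::real), (0::real))"
  have g0: "pgrad (1,0,0,0) X = 0" for X by (simp add: pgrad_def vec2_eq)
  have q: "is_ife C ?q" using g0 by (simp add: is_ife_def PiT_def pdxx_def)
  have "ife_fun C ?q = (\<lambda>X. 1)" by (simp add: ife_fun_def peval_def fun_eq_iff)
  then have "edge_avg C j (ife_fun C ?q) = 1" for j by (simp add: avg_int)
  then have "?q s = (\<Sum>i<NN C. 1 *\<^sub>R phi i s)"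
    by (intro interp[OF q]) simp
  then have "peval (?q s) X = (\<Sum>i<NN C. peval (phi i s) X)"
    by (simp add: peval_sum)
  then show ?thesis by (simp add: peval_def)
qed


lemma Sc_Iset:
  assumes i: "i < NN C" and I: "i \<in> Iset C (opp s)"
  shows "Sc s i = nb C \<bullet> (mid C i - Dp C)"
proof -
  obtain T0 where T0: "finite T0" "\<And>t. t \<in> {0..1} - T0 \<Longrightarrow>
      (gam i t \<in> Tsg C Pos \<or> gam i t \<in> Tsg C Neg)
      \<and> (gam i t \<in> Tsg C Pos \<longrightarrow> gam i t \<in> Tp C Pos) \<and> (gam i t \<in> Tsg C Neg \<longrightarrow> gam i t \<notin> Tp C Pos)"
    using exc_t[OF i] by blast
  have ecl: "edge C i \<subseteq> closure (Tsg C (opp s))" using I by (simp add: Iset_def)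
  have "hf s i t = peval (lin (nb C) (Dp C)) (gam i t)" if t: "t \<in> {0..1} - T0" for t
  proof -
    have "gam i t \<in> closure (Tsg C (opp s))" using ecl seg_in_edge t by blast
    then have "gam i t \<notin> Tsg C s" using Tsg_cl[of s] by blast
    then have "gam i t \<in> Tsg C (opp s)" using T0(2)[OF t] by (cases s) auto
    then show ?thesis by (simp add: hf_def)
  qed
  then have "Sc s i = integral {0..1} (\<lambda>t. peval (lin (nb C) (Dp C)) (gam i t))"
    unfolding Sc_def by (intro integral_spike[OF negligible_finite[OF T0(1)]]) simp
  then show ?thesis by (simp only: int_linp)
qed

lemma Sc_none:
  assumes i: "i < NN C" and I1: "i \<notin> Iset C (opp s)" and I2: "i \<notin> Iint C"
  shows "Sc s i = 0"
proof -
  have e0: "edge C i \<inter> Tsg C (opp s) = {}"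
  proof (rule ccontr)
    assume ne: "edge C i \<inter> Tsg C (opp s) \<noteq> {}"
    have "edge C i \<inter> Tsg C s = {}"
      using I2 ne i by (cases s) (auto simp: Iint_def)
    obtain F where F: "finite F" "\<forall>X \<in> edge C i - F. (X \<in> Tsg C Pos \<or> X \<in> Tsg C Neg)"
      using exc[OF i] by blast
    have sub: "edge C i - F \<subseteq> Tsg C (opp s)"
      using F(2) \<open>edge C i \<inter> Tsg C s = {}\<close> by (cases s) auto
    have "edge C i \<subseteq> closure (Tsg C (opp s))"
    proof
      fix X assume "X \<in> edge C i"
      then show "X \<in> closure (Tsg C (opp s))"
        using closure_seg_diff[OF V_ne[OF hx hy cc] _ F(1)] sub by (auto simp: edge_def)
    qed
    then have "i \<in> Iset C (opp s)" using i by (simp add: Iset_def)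
    then show False using I1 by simp
  qed
  have "hf s i t = 0" if "t \<in> {0..1}" for t
    using e0 seg_in_edge[OF that] by (auto simp: hf_def indicator_def)
  then have "Sc s i = integral {0..1} (\<lambda>t::real. 0::real)"
    unfolding Sc_def by (intro integral_cong) simp
  then show ?thesis by simp
qed

lemma Iint_not_Iset: "i \<in> Iint C \<Longrightarrow> i \<notin> Iset C s"
proof
  assume a: "i \<in> Iint C" "i \<in> Iset C s"
  then obtain X where "X \<in> edge C i" "X \<in> Tsg C (opp s)" by (cases s) (auto simp: Iint_def)
  moreover have "edge C i \<subseteq> closure (Tsg C s)" using a by (simp add: Iset_def)
  ultimately show False using Tsg_cl[of "opp s"] by auto
qed

lemma Lam_s_zero: "Lam_s C phi Xb s X = 0"
proof -
  let ?p = "\<lambda>i. peval (phi i s) X"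
  let ?f = "\<lambda>i. ?p i *\<^sub>R ((cs s * Sc s i) *\<^sub>R vF C)"
  have IS: "Iset C (opp s) \<subseteq> {..<NN C}" "Iint C \<subseteq> {..<NN C}" by (auto simp: Iset_def Iint_def)
  have fin: "finite (Iset C (opp s))" "finite (Iint C)" using IS finite_subset by blast+
  have s1: "(\<Sum>i\<in>Iset C (opp s). ?p i *\<^sub>R (transpose (Mbar C s - mat 1) *v (mid C i - Xb i)))
       = (\<Sum>i\<in>Iset C (opp s). ?f i)"
  proof (rule sum.cong[OF refl])
    fix i assume i: "i \<in> Iset C (opp s)"
    then have "i < NN C" using IS by auto
    then show "?p i *\<^sub>R (transpose (Mbar C s - mat 1) *v (mid C i - Xb i)) = ?f i"
      using Sc_Iset[OF _ i] by (subst MT) (simp add: Xb_perp)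
  qed
  have s2: "(\<Sum>i\<in>Iint C. ?p i *\<^sub>R ((1 / elen C i) *\<^sub>R seg_int (V C i) (V C (Suc i))
          (\<lambda>P. (indicator (Tsg C (opp s)) P :: real) *\<^sub>R (transpose (Mbar C s - mat 1) *v (P - Xb i)))))
       = (\<Sum>i\<in>Iint C. ?f i)"
  proof (rule sum.cong[OF refl])
    fix i assume i: "i \<in> Iint C"
    then have "i < NN C" using IS by auto
    then show "?p i *\<^sub>R ((1 / elen C i) *\<^sub>R seg_int (V C i) (V C (Suc i))
          (\<lambda>P. (indicator (Tsg C (opp s)) P :: real) *\<^sub>R (transpose (Mbar C s - mat 1) *v (P - Xb i)))) = ?f i"
      by (simp only: W_eq)
  qed
  have dj: "Iset C (opp s) \<inter> Iint C = {}" using Iint_not_Iset by blast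
  have s3: "(\<Sum>i\<in>Iset C (opp s). ?f i) + (\<Sum>i\<in>Iint C. ?f i) = (\<Sum>i<NN C. ?f i)"
  proof -
    have "(\<Sum>i\<in>Iset C (opp s). ?f i) + (\<Sum>i\<in>Iint C. ?f i) = (\<Sum>i\<in>Iset C (opp s) \<union> Iint C. ?f i)"
      by (rule sum.union_disjoint[symmetric]) (use fin dj in auto)
    also have "\<dots> = (\<Sum>i<NN C. ?f i)"
      by (rule sum.mono_neutral_left) (use IS Sc_none in auto)
    finally show ?thesis .
  qed
  have L: "Lam_s C phi Xb s X = (\<Sum>i<NN C. ?p i *\<^sub>R (mid C i - X)) + (\<Sum>i<NN C. ?f i)"
    unfolding Lam_s_def s1 s2 using s3 by (simp add: add.assoc)
  show ?thesis unfolding vec_eq_iff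
  proof
    fix k
    have "(Lam_s C phi Xb s X) $ k = (\<Sum>i<NN C. ?p i * (mid C i - X) $ k) + (\<Sum>i<NN C. ?p i * (cs s * Sc s i * vF C $ k))"
      unfolding L by (simp add: mult.assoc)
    also have "\<dots> = (\<Sum>i<NN C. Av s i $ k * ?p i) + (Dp C - X) $ k * (\<Sum>i<NN C. ?p i)"
      by (simp add: Av_def sum.distrib[symmetric] sum_distrib_left algebra_simps)
    also have "\<dots> = 0"
      using Uk_interp[of X k s] one_interp[of s X] by simp
    finally show "Lam_s C phi Xb s X $ k = 0 $ k" by simp
  qed
qed

lemma Lam_zero: "Lam C phi Xb X = 0"
  by (simp add: Lam_def Lam_s_zero)

end

theorem mainTheorem9:
  fixes C :: cfg
    and \<gamma> \<gamma>' \<gamma>'' :: "real \<Rightarrow> real^2" and t0 :: real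
    and phi :: "nat \<Rightarrow> sgn \<Rightarrow> poly2" and Xb :: "nat \<Rightarrow> real^2"
  assumes elem: "hx C > 0" "hy C > 0" "cutc C < 4"
    and beta: "bp C > 0" "bm C > 0"
    and opens: "open (Om C Pos)" "open (Om C Neg)"
    and disj: "Om C Pos \<inter> Om C Neg = {}" "Gam C \<inter> Om C Pos = {}" "Gam C \<inter> Om C Neg = {}"
    and separ: "Gam C \<subseteq> frontier (Om C Pos) \<inter> frontier (Om C Neg)"
    and cover: "Tset C \<subseteq> Om C Pos \<union> Om C Neg \<union> Gam C"
    and interface: "Gam C \<inter> interior (Tset C) \<noteq> {}"
    and DE: "Gam C \<inter> frontier (Tset C) = {Dp C, Ep C}" "Dp C \<noteq> Ep C"
    and H2: "\<not> (\<exists>i<NN C. Dp C \<in> edge C i \<and> Ep C \<in> edge C i)"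
    and H3: "Gam C \<inter> Tset C = \<gamma> ` {0..1}" "\<gamma> 0 = Dp C" "\<gamma> 1 = Ep C" "inj_on \<gamma> {0..1}"
      "\<forall>t\<in>{0..1}. (\<gamma> has_vector_derivative \<gamma>' t) (at t within {0..1})
                 \<and> (\<gamma>' has_vector_derivative \<gamma>'' t) (at t within {0..1}) \<and> \<gamma>' t \<noteq> 0"
      "continuous_on {0..1} \<gamma>''"
    and nbar: "norm (nb C) = 1" "nb C \<bullet> (Ep C - Dp C) = 0"
    and sides: "\<exists>\<sigma>::real. \<sigma> \<noteq> 0
      \<and> (\<forall>Q \<in> frontier (Tset C) \<inter> closure (Tsg C Pos). \<sigma> * (nb C \<bullet> (Q - Dp C)) \<ge> 0)
      \<and> (\<forall>Q \<in> frontier (Tset C) \<inter> closure (Tsg C Neg). \<sigma> * (nb C \<bullet> (Q - Dp C)) \<le> 0)"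
    and variant: "if curve C
      then Fp C = \<gamma> t0 \<and> 0 < t0 \<and> t0 < 1 \<and> norm (vF C) = 1 \<and> vF C \<bullet> \<gamma>' t0 = 0
           \<and> nb C \<bullet> vF C > 0
      else Fp C \<in> closed_segment (Dp C) (Ep C) \<and> vF C = nb C"
    and basis: "\<forall>i<NN C. is_ife C (phi i)"
      "\<forall>i<NN C. \<forall>j<NN C. edge_avg C j (ife_fun C (phi i)) = (if i = j then 1 else 0)"
    and Xbar: "\<forall>i<NN C. Xb i \<in> closed_segment (Dp C) (Ep C)"
  shows "(\<forall>k::2. Sint C (\<lambda>X. Lam C phi Xb X $ k))
       \<and> (\<forall>i<NN C. seg_int (V C i) (V C (Suc i)) (Lam C phi Xb) = 0)"
proof -
  have vc: "curve C \<Longrightarrow> nb C \<bullet> vF C > 0" using variant by simp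
  have vl: "\<not> curve C \<Longrightarrow> vF C = nb C" using variant by simp
  have loc: "mloc C phi Xb"
    by unfold_locales (use elem beta opens disj cover DE H2 nbar sides vc vl basis Xbar in auto)
  have Z: "Lam C phi Xb = (\<lambda>X. 0)" using mloc.Lam_zero[OF loc] by (simp add: fun_eq_iff)
  have g0: "pgrad (0,0,0,0) X = 0" for X by (simp add: pgrad_def vec2_eq)
  have q0: "is_ife C (\<lambda>_. (0,0,0,0))" using g0 by (simp add: is_ife_def PiT_def pdxx_def)
  have "Sint C (\<lambda>X. Lam C phi Xb X $ k)" for k :: 2
    unfolding Sint_def Z using q0 by (intro exI[of _ "\<lambda>_. (0,0,0,0)"]) (simp add: peval_def)
  moreover have "seg_int (V C i) (V C (Suc i)) (Lam C phi Xb) = 0" for i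
    unfolding Z seg_int_def by simp
  ultimately show ?thesis by blast
qed

end
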